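(* Consistent Clifford deformations give rise to commuting stabilizers of the surface code.
   Context: Consider the surface code with qubits placed on a rectangular lattice $L$, whose stabilizer group is generated by star operators $A_{\Diamond} = \prod_{i \in \Diamond} X_i$ and plaquette operators $B_{\square} = \prod_{j \in \square} Z_j$, where $\Diamond$ and $\square$ denote cells of four nearest-neighbour qubits forming, respectively, the dual and primal sub-lattices (this is the CSS surface code). A Clifford deformation conjugates each physical qubit $i \in L$ independently by a single-qubit Clifford unitary, which amounts to replacing, on that qubit, each Pauli operator appearing in the stabilizers by another Pauli operator. Denote by $\sigma_i^s$ the (non-identity) Pauli operator measured on qubit $i \in L$ by stabilizer $s$. Each qubit $i$ is surrounded by stabilizers $v_1, v_2$ located vertically from it and stabilizers $h_1, h_2$ located horizontally from it. A Clifford deformation is called consistent if, for every qubit $i$, $\sigma_i^{v_1} = \sigma_i^{v_2} \neq \sigma_i^{h_1} = \sigma_i^{h_2}$. (For example, in the CSS surface code a qubit has $\sigma_i^{v_1} = \sigma_i^{v_2} = X_i$ and $\sigma_i^{h_1} = \sigma_i^{h_2} = Z_i$.) *)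

theory Defs
  imports Main
begin

text \<open>Single-qubit Pauli operators modulo phase (I = identity).\<close>
datatype pauli = PI | PX | PY | PZ

text \<open>Geometry of the (bulk, unbounded) rectangular surface-code lattice.\<close>
type_synonym site = "int \<times> int"

definition qubit_site :: "site \<Rightarrow> bool" where
  "qubit_site p \<longleftrightarrow> odd (fst p + snd p)"

definition stab_site :: "site \<Rightarrow> bool" where
  "stab_site s \<longleftrightarrow> even (fst s + snd s)"

definition is_star :: "site \<Rightarrow> bool" where
  "is_star s \<longleftrightarrow> stab_site s \<and> even (fst s)"

definition is_plaquette :: "site \<Rightarrow> bool" where
  "is_plaquette s \<longleftrightarrow> stab_site s \<and> odd (fst s)"

definition cell :: "site \<Rightarrow> site set" where
  "cell s = {(fst s + 1, snd s), (fst s - 1, snd s), (fst s, snd s + 1), (fst s, snd s - 1)}"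

definition vert_up :: "site \<Rightarrow> site" where "vert_up i = (fst i, snd i + 1)"
definition vert_down :: "site \<Rightarrow> site" where "vert_down i = (fst i, snd i - 1)"
definition horiz_right :: "site \<Rightarrow> site" where "horiz_right i = (fst i + 1, snd i)"
definition horiz_left :: "site \<Rightarrow> site" where "horiz_left i = (fst i - 1, snd i)"

definition css_pauli :: "site \<Rightarrow> pauli" where
  "css_pauli s = (if is_star s then PX else PZ)"

text \<open>A single-qubit Clifford unitary acts by conjugation on the non-identity
  Paulis as a permutation of {X,Y,Z} (up to signs, irrelevant for commutation),
  and every such permutation arises.\<close>
definition clifford_action :: "(pauli \<Rightarrow> pauli) \<Rightarrow> bool" where
  "clifford_action f \<longleftrightarrow> f PI = PI \<and> bij_betw f {PX, PY, PZ} {PX, PY, PZ}"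

definition clifford_deformation :: "(site \<Rightarrow> pauli \<Rightarrow> pauli) \<Rightarrow> bool" where
  "clifford_deformation C \<longleftrightarrow> (\<forall>i. qubit_site i \<longrightarrow> clifford_action (C i))"

definition sigma :: "(site \<Rightarrow> pauli \<Rightarrow> pauli) \<Rightarrow> site \<Rightarrow> site \<Rightarrow> pauli" where
  "sigma C i s = C i (css_pauli s)"

definition deformed_stab :: "(site \<Rightarrow> pauli \<Rightarrow> pauli) \<Rightarrow> site \<Rightarrow> (site \<Rightarrow> pauli)" where
  "deformed_stab C s = (\<lambda>i. if i \<in> cell s then sigma C i s else PI)"

definition consistent :: "(site \<Rightarrow> pauli \<Rightarrow> pauli) \<Rightarrow> bool" where
  "consistent C \<longleftrightarrow> (\<forall>i. qubit_site i \<longrightarrow>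
     sigma C i (vert_up i) = sigma C i (vert_down i) \<and>
     sigma C i (vert_down i) \<noteq> sigma C i (horiz_left i) \<and>
     sigma C i (horiz_left i) = sigma C i (horiz_right i))"

definition anticommute1 :: "pauli \<Rightarrow> pauli \<Rightarrow> bool" where
  "anticommute1 p q \<longleftrightarrow> p \<noteq> PI \<and> q \<noteq> PI \<and> p \<noteq> q"

text \<open>Two finitely supported Pauli strings commute iff they anticommute on an
  even number of tensor factors.\<close>
definition pauli_commute :: "('q \<Rightarrow> pauli) \<Rightarrow> ('q \<Rightarrow> pauli) \<Rightarrow> bool" where
  "pauli_commute P Q \<longleftrightarrow> even (card {i. anticommute1 (P i) (Q i)})"

end

theory Submission
  imports Defs
begin

lemma cell_qubit: "stab_site s \<Longrightarrow> i \<in> cell s \<Longrightarrow> qubit_site i"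
  by (auto simp: cell_def stab_site_def qubit_site_def)

lemma css_ne_PI: "css_pauli s \<in> {PX, PY, PZ}"
  by (simp add: css_pauli_def)

lemma inter_card:
  assumes "stab_site s" "stab_site t" "is_star s \<noteq> is_star t"
  shows "even (card (cell s \<inter> cell t))"
proof -
  obtain a b c d where st: "s = (a,b)" "t = (c,d)" by (cases s, cases t) auto
  have par: "odd (c - a)" "odd (d - b)" using assms st
    by (auto simp: stab_site_def is_star_def)
  consider "c = a + 1 \<and> d = b + 1" | "c = a + 1 \<and> d = b - 1" | "c = a - 1 \<and> d = b + 1"
    | "c = a - 1 \<and> d = b - 1" | "\<not> (\<bar>c - a\<bar> = 1 \<and> \<bar>d - b\<bar> = 1)" by arith
  then show ?thesis
  proof cases
    case 1 then have "cell s \<inter> cell t = {(a+1,b),(a,b+1)}" using st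
      by (auto simp: cell_def)
    then show ?thesis by simp
  next
    case 2 then have "cell s \<inter> cell t = {(a+1,b),(a,b-1)}" using st
      by (auto simp: cell_def)
    then show ?thesis by simp
  next
    case 3 then have "cell s \<inter> cell t = {(a-1,b),(a,b+1)}" using st
      by (auto simp: cell_def)
    then show ?thesis by simp
  next
    case 4 then have "cell s \<inter> cell t = {(a-1,b),(a,b-1)}" using st
      by (auto simp: cell_def)
    then show ?thesis by simp
  next
    case 5
    have "c - a \<noteq> 0" "d - b \<noteq> 0" using par by auto
    have "cell s \<inter> cell t = {}"
    proof (rule ccontr)
      assume "cell s \<inter> cell t \<noteq> {}"
      then obtain x y where "(x,y) \<in> cell s" "(x,y) \<in> cell t" by auto
      then have "(x = a+1 \<and> y = b \<or> x = a - 1 \<and> y = b \<or> x = a \<and> y = b+1 \<or> x = a \<and> y = b - 1)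
        \<and> (x = c+1 \<and> y = d \<or> x = c - 1 \<and> y = d \<or> x = c \<and> y = d+1 \<or> x = c \<and> y = d - 1)"
        using st by (simp add: cell_def)
      then show False using 5 \<open>c - a \<noteq> 0\<close> \<open>d - b \<noteq> 0\<close> by arith
    qed
    then show ?thesis by simp
  qed
qed

theorem lemma1:
  fixes C :: "site \<Rightarrow> pauli \<Rightarrow> pauli"
  assumes "clifford_deformation C"
    and "consistent C"
    and "stab_site s" and "stab_site t"
  shows "pauli_commute (deformed_stab C s) (deformed_stab C t)"
proof -
  have key: "anticommute1 (C i (css_pauli s)) (C i (css_pauli t)) \<longleftrightarrow> css_pauli s \<noteq> css_pauli t"
    if "i \<in> cell s" for i
  proof -
    have "clifford_action (C i)" using assms(1,3) that cell_qubit
      unfolding clifford_deformation_def by blast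
    then have f: "bij_betw (C i) {PX, PY, PZ} {PX, PY, PZ}" unfolding clifford_action_def by simp
    have s1: "C i (css_pauli s) \<in> {PX, PY, PZ}" "C i (css_pauli t) \<in> {PX, PY, PZ}"
      using bij_betw_apply[OF f css_ne_PI] by blast+
    have "C i (css_pauli s) = C i (css_pauli t) \<longleftrightarrow> css_pauli s = css_pauli t"
      using inj_on_eq_iff[OF bij_betw_imp_inj_on[OF f] css_ne_PI css_ne_PI] by blast
    then show ?thesis using s1 unfolding anticommute1_def by fastforce
  qed
  have A: "{i. anticommute1 (deformed_stab C s i) (deformed_stab C t i)}
      = (if css_pauli s = css_pauli t then {} else cell s \<inter> cell t)"
    using key by (auto simp: deformed_stab_def sigma_def anticommute1_def)
  show ?thesis
  proof (cases "css_pauli s = css_pauli t")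
    case True then show ?thesis unfolding pauli_commute_def A by simp
  next
    case False
    then have "is_star s \<noteq> is_star t" by (auto simp: css_pauli_def split: if_splits)
    then show ?thesis unfolding pauli_commute_def A using False inter_card assms(3,4) by simp
  qed
qed

end
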